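(* Let $p\geq 1$ and let $\mathcal{A}$ be an $n$-dimensional naturally graded $p$-filiform associative algebra over $\mathbb{C}$, identified with its natural grading $\mathcal{A}=\bigoplus_{i\geq 1}\mathcal{A}_i$. Suppose $\{e_1,\dots,e_{n-p},f_1,\dots,f_p\}$ is a basis of $\mathcal{A}$ such that $e_1\in\mathcal{A}_1$, $e_1e_i=e_{i+1}$ for $1\leq i\leq n-p-1$, $e_1e_{n-p}=0$, $e_1f_j=0$ for $1\leq j\leq p$, $e_i\in\mathcal{A}_i$ for $1\leq i\leq n-p$, and each $f_i$ is homogeneous with $f_i\in\mathcal{A}_{r_i}$, where $r_1\leq r_2\leq\dots\leq r_p\leq n-p$. Then $r_s\leq s$ for every $s\in\{1,2,\dots,p\}$.
   Context: All algebras are finite-dimensional associative algebras over $\mathbb{C}$. For an algebra $\mathcal{A}$ put $\mathcal{A}^1=\mathcal{A}$ and $\mathcal{A}^{i+1}=\sum_{k=1}^{i}\mathcal{A}^k\mathcal{A}^{i+1-k}$; $\mathcal{A}$ is nilpotent if $\mathcal{A}^i=0$ for some $i$. For nilpotent $\mathcal{A}$ with nilindex $k$ (i.e. $\mathcal{A}^k\neq 0=\mathcal{A}^{k+1}$), set $\mathcal{A}_i=\mathcal{A}^i/\mathcal{A}^{i+1}$ and $\operatorname{gr}\mathcal{A}=\mathcal{A}_1\oplus\dots\oplus\mathcal{A}_k$, a graded algebra with $\mathcal{A}_i\mathcal{A}_j\subseteq\mathcal{A}_{i+j}$; $\mathcal{A}$ is naturally graded if $\mathcal{A}\cong\operatorname{gr}\mathcal{A}$,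 in which case $\mathcal{A}$ is identified with $\bigoplus_i\mathcal{A}_i$ (so $\mathcal{A}_i\mathcal{A}_j\subseteq\mathcal{A}_{i+j}$ and $\mathcal{A}^m=\bigoplus_{i\geq m}\mathcal{A}_i$). For $x\in\mathcal{A}$, $L_x:\mathcal{A}\to\mathcal{A}$, $z\mapsto xz$. For $x\in\mathcal{A}\setminus\mathcal{A}^2$, $C(x)$ is the decreasing sequence of sizes of the Jordan blocks of $L_x$; sequences are ordered lexicographically, and the characteristic sequence is $C(\mathcal{A})=\max_{x\in\mathcal{A}\setminus\mathcal{A}^2}C(x)$. $\mathcal{A}$ is $p$-filiform if $C(\mathcal{A})=(n-p,1,\dots,1)$ (with $p$ entries equal to $1$), where $n=\dim\mathcal{A}$. *)

theory Defs
  imports "Jordan_Normal_Form.Jordan_Normal_Form"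
begin

text \<open>An n-dimensional algebra over the complex numbers is modelled on complex vectors of
  dimension n (coordinates w.r.t. a fixed basis), with multiplication given by structure
  constants gam i j k (the k-th coordinate of the product of the i-th and j-th basis vector).
  Such a multiplication is automatically bilinear; associativity is a separate hypothesis.\<close>

definition amul :: "nat \<Rightarrow> (nat \<Rightarrow> nat \<Rightarrow> nat \<Rightarrow> complex) \<Rightarrow> complex vec \<Rightarrow> complex vec \<Rightarrow> complex vec" where
  "amul n gam x y = vec n (\<lambda>k. \<Sum>i<n. \<Sum>j<n. x $ i * y $ j * gam i j k)"

definition is_assoc_alg :: "nat \<Rightarrow> (nat \<Rightarrow> nat \<Rightarrow> nat \<Rightarrow> complex) \<Rightarrow> bool" where
  "is_assoc_alg n gam \<longleftrightarrow>
     (\<forall>x\<in>carrier_vec n. \<forall>y\<in>carrier_vec n. \<forall>z\<in>carrier_vec n.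
        amul n gam (amul n gam x y) z = amul n gam x (amul n gam y z))"

definition vspan :: "nat \<Rightarrow> complex vec set \<Rightarrow> complex vec set" where
  "vspan n S = {v. \<exists>F c. finite F \<and> F \<subseteq> S \<and>
       v = finsum_vec TYPE(complex) n (\<lambda>u. c u \<cdot>\<^sub>v u) F}"

definition is_subspace :: "nat \<Rightarrow> complex vec set \<Rightarrow> bool" where
  "is_subspace n V \<longleftrightarrow> V \<subseteq> carrier_vec n \<and> vspan n V = V"

text \<open>Powers: A^1 = A, A^(i+1) = sum_{k=1}^{i} A^k A^(i+1-k); a sum of products of subspaces
  is the span of all the corresponding products.\<close>
function apow :: "nat \<Rightarrow> (nat \<Rightarrow> nat \<Rightarrow> nat \<Rightarrow> complex) \<Rightarrow> nat \<Rightarrow> complex vec set" where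
  "apow n gam i =
     (if i \<le> 1 then carrier_vec n
      else vspan n (\<Union>k\<in>{1..<i}. {amul n gam x y | x y. x \<in> apow n gam k \<and> y \<in> apow n gam (i - k)}))"
  by pat_completeness auto
termination
  by (relation "measure (\<lambda>(n, gam, i). i)") auto

declare apow.simps[simp del]

definition is_nilpotent_alg :: "nat \<Rightarrow> (nat \<Rightarrow> nat \<Rightarrow> nat \<Rightarrow> complex) \<Rightarrow> bool" where
  "is_nilpotent_alg n gam \<longleftrightarrow> (\<exists>i\<ge>1. apow n gam i = {0\<^sub>v n})"

text \<open>G is the natural grading with which the (naturally graded, nilpotent) algebra is identified:
  components G i (i \<ge> 1) are subspaces, G i G j \<subseteq> G (i+j), the sum of all G i is direct,
  and A^m = (direct sum of the G i with i \<ge> m) for every m \<ge> 1 (in particular A = sum of all G i).\<close>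
definition is_natural_grading :: "nat \<Rightarrow> (nat \<Rightarrow> nat \<Rightarrow> nat \<Rightarrow> complex) \<Rightarrow> (nat \<Rightarrow> complex vec set) \<Rightarrow> bool" where
  "is_natural_grading n gam G \<longleftrightarrow>
     (\<forall>i\<ge>1. is_subspace n (G i)) \<and>
     (\<forall>i\<ge>1. \<forall>j\<ge>1. \<forall>x\<in>G i. \<forall>y\<in>G j. amul n gam x y \<in> G (i + j)) \<and>
     (\<forall>F v. finite F \<and> F \<subseteq> {1..} \<and> (\<forall>i\<in>F. v i \<in> G i) \<and>
            finsum_vec TYPE(complex) n v F = 0\<^sub>v n \<longrightarrow> (\<forall>i\<in>F. v i = 0\<^sub>v n)) \<and>
     (\<forall>m\<ge>1. apow n gam m = vspan n (\<Union>i\<in>{m..}. G i))"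

definition Lmat :: "nat \<Rightarrow> (nat \<Rightarrow> nat \<Rightarrow> nat \<Rightarrow> complex) \<Rightarrow> complex vec \<Rightarrow> complex mat" where
  "Lmat n gam x = mat n n (\<lambda>(i, j). amul n gam x (unit_vec n j) $ i)"

definition jordan_sizes :: "complex mat \<Rightarrow> nat list" where
  "jordan_sizes M = (SOME cs. \<exists>n_as. jordan_nf M n_as \<and> cs = rev (sort (map fst n_as)))"

definition charseq_elt :: "nat \<Rightarrow> (nat \<Rightarrow> nat \<Rightarrow> nat \<Rightarrow> complex) \<Rightarrow> complex vec \<Rightarrow> nat list" where
  "charseq_elt n gam x = jordan_sizes (Lmat n gam x)"

text \<open>C(A) = lexicographic maximum of C(x) over x \<in> A \<setminus> A^2; p-filiform means
  C(A) = (n-p, 1, ..., 1) with p ones.\<close>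
definition is_p_filiform :: "nat \<Rightarrow> (nat \<Rightarrow> nat \<Rightarrow> nat \<Rightarrow> complex) \<Rightarrow> nat \<Rightarrow> bool" where
  "is_p_filiform n gam p \<longleftrightarrow>
     (let t = (n - p) # replicate p 1 in
       (\<exists>x\<in>carrier_vec n - apow n gam 2. charseq_elt n gam x = t) \<and>
       (\<forall>x\<in>carrier_vec n - apow n gam 2. lexordp_eq (charseq_elt n gam x) t))"

definition is_basis :: "nat \<Rightarrow> (nat \<Rightarrow> complex vec) \<Rightarrow> bool" where
  "is_basis n b \<longleftrightarrow>
     (\<forall>i<n. b i \<in> carrier_vec n) \<and>
     (\<forall>c. finsum_vec TYPE(complex) n (\<lambda>i. c i \<cdot>\<^sub>v b i) {..<n} = 0\<^sub>v n \<longrightarrow> (\<forall>i<n. c i = 0)) \<and>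
     (\<forall>v\<in>carrier_vec n. \<exists>c. v = finsum_vec TYPE(complex) n (\<lambda>i. c i \<cdot>\<^sub>v b i) {..<n})"

end

theory Submission
  imports Defs
begin


definition lin_closed :: "nat \<Rightarrow> complex vec set \<Rightarrow> bool" where
  "lin_closed n T \<longleftrightarrow> 0\<^sub>v n \<in> T \<and> (\<forall>u\<in>T. \<forall>v\<in>T. u + v \<in> T) \<and> (\<forall>a u. u \<in> T \<longrightarrow> a \<cdot>\<^sub>v u \<in> T)"

lemma finsum_vec_eq:
  assumes "finite F" "\<And>a. a \<in> F \<Longrightarrow> f a \<in> carrier_vec n"
  shows "finsum_vec TYPE(complex) n f F = vec n (\<lambda>k. \<Sum>a\<in>F. f a $ k)"
proof -
  have c: "finsum_vec TYPE(complex) n f F \<in> carrier_vec n"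
    by (rule finsum_vec_closed) (use assms in auto)
  show ?thesis
  proof (rule eq_vecI)
    fix i assume "i < dim_vec (vec n (\<lambda>k. \<Sum>a\<in>F. f a $ k))"
    then have i: "i < n" by simp
    show "finsum_vec TYPE(complex) n f F $ i = vec n (\<lambda>k. \<Sum>a\<in>F. f a $ k) $ i"
      using index_finsum_vec[OF assms(1) i, of f] assms(2) i by auto
  next
    show "dim_vec (finsum_vec TYPE(complex) n f F) = dim_vec (vec n (\<lambda>k. \<Sum>a\<in>F. f a $ k))"
      using c by simp
  qed
qed

lemma smult_idx: "v \<in> carrier_vec n \<Longrightarrow> k < n \<Longrightarrow> (a \<cdot>\<^sub>v v) $ k = a * v $ k"
  by simp

lemma vspan_carrier:
  assumes "S \<subseteq> carrier_vec n" shows "vspan n S \<subseteq> carrier_vec n"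
proof
  fix v assume "v \<in> vspan n S"
  then obtain F c where F: "finite F" "F \<subseteq> S" "v = finsum_vec TYPE(complex) n (\<lambda>u. c u \<cdot>\<^sub>v u) F"
    unfolding vspan_def by blast
  show "v \<in> carrier_vec n" unfolding F(3)
    by (rule finsum_vec_closed) (use F assms in auto)
qed

lemma vspan_mono: "S \<subseteq> S' \<Longrightarrow> vspan n S \<subseteq> vspan n S'"
  unfolding vspan_def by auto

lemma vspan_base:
  assumes "S \<subseteq> carrier_vec n" "v \<in> S" shows "v \<in> vspan n S"
proof -
  have "v = finsum_vec TYPE(complex) n (\<lambda>u. 1 \<cdot>\<^sub>v u) {v}"
  proof -
    have "finsum_vec TYPE(complex) n (\<lambda>u. 1 \<cdot>\<^sub>v u) {v} = vec n (\<lambda>k. \<Sum>a\<in>{v}. (1 \<cdot>\<^sub>v a) $ k)"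
      by (rule finsum_vec_eq) (use assms in auto)
    also have "\<dots> = v" using assms by (intro eq_vecI) auto
    finally show ?thesis by simp
  qed
  then show ?thesis unfolding vspan_def
    by (intro CollectI exI[of _ "{v}"] exI[of _ "\<lambda>_. 1"]) (use assms in auto)
qed

lemma vspan_closed:
  assumes S: "S \<subseteq> carrier_vec n" shows "lin_closed n (vspan n S)"
  unfolding lin_closed_def
proof (intro conjI ballI allI impI)
  show "0\<^sub>v n \<in> vspan n S" unfolding vspan_def
    by (rule CollectI, rule exI[of _ "{}"], auto simp: finsum_vec_empty)
next
  fix u v assume "u \<in> vspan n S" "v \<in> vspan n S"
  then obtain F1 c1 F2 c2 where F: "finite F1" "F1 \<subseteq> S" "u = finsum_vec TYPE(complex) n (\<lambda>u. c1 u \<cdot>\<^sub>v u) F1"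
    "finite F2" "F2 \<subseteq> S" "v = finsum_vec TYPE(complex) n (\<lambda>u. c2 u \<cdot>\<^sub>v u) F2"
    unfolding vspan_def by blast
  define c where "c = (\<lambda>w. (if w \<in> F1 then c1 w else 0) + (if w \<in> F2 then c2 w else 0))"
  have "u + v = finsum_vec TYPE(complex) n (\<lambda>w. c w \<cdot>\<^sub>v w) (F1 \<union> F2)"
  proof -
    have cF1: "\<forall>w \<in> F1 \<union> F2. w \<in> carrier_vec n" using F S by auto
    have e0: "\<And>k. (\<Sum>w\<in>F1 \<union> F2. c w * w $ k) = (\<Sum>w\<in>F1. c1 w * w $ k) + (\<Sum>w\<in>F2. c2 w * w $ k)"
    proof -
      fix k
      have "(\<Sum>w\<in>F1 \<union> F2. c w * w $ k) = (\<Sum>w\<in>F1 \<union> F2. (if w \<in> F1 then c1 w * w $ k else 0))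
          + (\<Sum>w\<in>F1 \<union> F2. (if w \<in> F2 then c2 w * w $ k else 0))"
        unfolding c_def sum.distrib[symmetric] by (rule sum.cong) (auto simp: distrib_right)
      also have "\<dots> = (\<Sum>w\<in>F1. c1 w * w $ k) + (\<Sum>w\<in>F2. c2 w * w $ k)"
        using F by (simp add: sum.If_cases Int_absorb1 Int_absorb2 Int_commute)
      finally show "?thesis k" .
    qed
    have e: "(\<Sum>w\<in>F1 \<union> F2. (c w \<cdot>\<^sub>v w) $ k) = (\<Sum>w\<in>F1. (c1 w \<cdot>\<^sub>v w) $ k) + (\<Sum>w\<in>F2. (c2 w \<cdot>\<^sub>v w) $ k)"
      if k: "k < n" for k
    proof -
      have 1: "(\<Sum>w\<in>F1 \<union> F2. (c w \<cdot>\<^sub>v w) $ k) = (\<Sum>w\<in>F1 \<union> F2. c w * w $ k)"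
        by (rule sum.cong) (use cF1 k smult_idx in force)+
      have 2: "(\<Sum>w\<in>F1. (c1 w \<cdot>\<^sub>v w) $ k) = (\<Sum>w\<in>F1. c1 w * w $ k)"
        by (rule sum.cong) (use cF1 k smult_idx in force)+
      have 3: "(\<Sum>w\<in>F2. (c2 w \<cdot>\<^sub>v w) $ k) = (\<Sum>w\<in>F2. c2 w * w $ k)"
        by (rule sum.cong) (use cF1 k smult_idx in force)+
      show ?thesis unfolding 1 2 3 e0 ..
    qed
    show ?thesis unfolding F(3,6)
      using F cF1 by (subst (1 2 3) finsum_vec_eq) (auto intro!: eq_vecI simp: e)
  qed
  then show "u + v \<in> vspan n S" unfolding vspan_def
    by (intro CollectI exI[of _ "F1 \<union> F2"] exI[of _ c]) (use F in auto)
next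
  fix a u assume "u \<in> vspan n S"
  then obtain F1 c1 where F: "finite F1" "F1 \<subseteq> S" "u = finsum_vec TYPE(complex) n (\<lambda>u. c1 u \<cdot>\<^sub>v u) F1"
    unfolding vspan_def by blast
  have "a \<cdot>\<^sub>v u = finsum_vec TYPE(complex) n (\<lambda>w. (a * c1 w) \<cdot>\<^sub>v w) F1"
  proof -
    have d: "\<forall>w\<in>F1. dim_vec w = n" using F S by auto
    show ?thesis unfolding F(3) using F S
      by (subst (1 2) finsum_vec_eq) (use d in \<open>auto intro!: eq_vecI sum.cong simp: sum_distrib_left mult.assoc\<close>)
  qed
  then show "a \<cdot>\<^sub>v u \<in> vspan n S" unfolding vspan_def
    by (intro CollectI exI[of _ "F1"] exI[of _ "\<lambda>w. a * c1 w"]) (use F in auto)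
qed

lemma vspan_sub:
  assumes S: "S \<subseteq> carrier_vec n" and T: "lin_closed n T" and ST: "S \<subseteq> T"
  shows "vspan n S \<subseteq> T"
proof
  fix v assume "v \<in> vspan n S"
  then obtain F c where F: "finite F" "F \<subseteq> S" "v = finsum_vec TYPE(complex) n (\<lambda>u. c u \<cdot>\<^sub>v u) F"
    unfolding vspan_def by blast
  have "finsum_vec TYPE(complex) n (\<lambda>u. c u \<cdot>\<^sub>v u) F \<in> T"
    using F(1,2)
  proof (induction F rule: finite_induct)
    case empty then show ?case using T by (simp add: finsum_vec_empty lin_closed_def)
  next
    case (insert x F)
    have "finsum_vec TYPE(complex) n (\<lambda>u. c u \<cdot>\<^sub>v u) (insert x F) =
        c x \<cdot>\<^sub>v x + finsum_vec TYPE(complex) n (\<lambda>u. c u \<cdot>\<^sub>v u) F"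
      by (rule finsum_vec_insert) (use insert S in auto)
    moreover have "c x \<cdot>\<^sub>v x \<in> T" using T insert ST unfolding lin_closed_def by auto
    ultimately show ?case using insert T unfolding lin_closed_def by auto
  qed
  then show "v \<in> T" using F by simp
qed

lemma lc_in:
  assumes "finite I" "lin_closed n T" "T \<subseteq> carrier_vec n" "\<And>t. t \<in> I \<Longrightarrow> w t \<in> T"
  shows "finsum_vec TYPE(complex) n (\<lambda>t. c t \<cdot>\<^sub>v w t) I \<in> T"
  using assms
proof (induction I rule: finite_induct)
  case empty then show ?case by (simp add: finsum_vec_empty lin_closed_def)
next
  case (insert x F)
  have wc: "\<And>t. t \<in> insert x F \<Longrightarrow> w t \<in> carrier_vec n" using insert.prems by blast
  have "finsum_vec TYPE(complex) n (\<lambda>t. c t \<cdot>\<^sub>v w t) (insert x F) =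
      c x \<cdot>\<^sub>v w x + finsum_vec TYPE(complex) n (\<lambda>t. c t \<cdot>\<^sub>v w t) F"
    by (rule finsum_vec_insert) (use insert.hyps wc in auto)
  moreover have "c x \<cdot>\<^sub>v w x \<in> T" using insert unfolding lin_closed_def by auto
  ultimately show ?case using insert unfolding lin_closed_def by auto
qed

lemma subspace_closed: "is_subspace n V \<Longrightarrow> lin_closed n V"
  unfolding is_subspace_def using vspan_closed by metis



lemma amul_carrier[simp]: "amul n gam x y \<in> carrier_vec n"
  by (simp add: amul_def)

lemma amul_dim[simp]: "dim_vec (amul n gam x y) = n"
  by (simp add: amul_def)

lemma amul_add_left:
  assumes "x \<in> carrier_vec n" "y \<in> carrier_vec n"
  shows "amul n gam (x + y) z = amul n gam x z + amul n gam y z"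
proof (rule eq_vecI)
  fix k assume "k < dim_vec (amul n gam x z + amul n gam y z)"
  then have k: "k < n" by simp
  have "(\<Sum>i<n. \<Sum>j<n. (x + y) $ i * z $ j * gam i j k) =
      (\<Sum>i<n. \<Sum>j<n. x $ i * z $ j * gam i j k) + (\<Sum>i<n. \<Sum>j<n. y $ i * z $ j * gam i j k)"
    unfolding sum.distrib[symmetric] using assms
    by (intro sum.cong refl) (auto simp: algebra_simps)
  then show "amul n gam (x + y) z $ k = (amul n gam x z + amul n gam y z) $ k"
    using k by (simp add: amul_def)
qed (simp)

lemma amul_add_right:
  assumes "y \<in> carrier_vec n" "z \<in> carrier_vec n"
  shows "amul n gam x (y + z) = amul n gam x y + amul n gam x z"
proof (rule eq_vecI)
  fix k assume "k < dim_vec (amul n gam x y + amul n gam x z)"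
  then have k: "k < n" by simp
  have "(\<Sum>i<n. \<Sum>j<n. x $ i * (y + z) $ j * gam i j k) =
      (\<Sum>i<n. \<Sum>j<n. x $ i * y $ j * gam i j k) + (\<Sum>i<n. \<Sum>j<n. x $ i * z $ j * gam i j k)"
    unfolding sum.distrib[symmetric] using assms
    by (intro sum.cong refl) (auto simp: algebra_simps)
  then show "amul n gam x (y + z) $ k = (amul n gam x y + amul n gam x z) $ k"
    using k by (simp add: amul_def)
qed (simp)

lemma amul_smult_left:
  assumes "x \<in> carrier_vec n"
  shows "amul n gam (a \<cdot>\<^sub>v x) z = a \<cdot>\<^sub>v amul n gam x z"
proof (rule eq_vecI)
  fix k assume "k < dim_vec (a \<cdot>\<^sub>v amul n gam x z)"
  then have k: "k < n" by simp
  have "(\<Sum>i<n. \<Sum>j<n. (a \<cdot>\<^sub>v x) $ i * z $ j * gam i j k) =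
      a * (\<Sum>i<n. \<Sum>j<n. x $ i * z $ j * gam i j k)"
    unfolding sum_distrib_left using assms
    by (intro sum.cong refl) (auto simp: algebra_simps)
  then show "amul n gam (a \<cdot>\<^sub>v x) z $ k = (a \<cdot>\<^sub>v amul n gam x z) $ k"
    using k by (simp add: amul_def)
qed (simp)

lemma amul_smult_right:
  assumes "y \<in> carrier_vec n"
  shows "amul n gam x (a \<cdot>\<^sub>v y) = a \<cdot>\<^sub>v amul n gam x y"
proof (rule eq_vecI)
  fix k assume "k < dim_vec (a \<cdot>\<^sub>v amul n gam x y)"
  then have k: "k < n" by simp
  have "(\<Sum>i<n. \<Sum>j<n. x $ i * (a \<cdot>\<^sub>v y) $ j * gam i j k) =
      a * (\<Sum>i<n. \<Sum>j<n. x $ i * y $ j * gam i j k)"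
    unfolding sum_distrib_left using assms
    by (intro sum.cong refl) (auto simp: algebra_simps)
  then show "amul n gam x (a \<cdot>\<^sub>v y) $ k = (a \<cdot>\<^sub>v amul n gam x y) $ k"
    using k by (simp add: amul_def)
qed (simp)

lemma amul_zero_left: "amul n gam (0\<^sub>v n) z = 0\<^sub>v n"
  by (rule eq_vecI) (simp_all add: amul_def)

lemma amul_zero_right: "amul n gam x (0\<^sub>v n) = 0\<^sub>v n"
  by (rule eq_vecI) (simp_all add: amul_def)

lemma amul_vspan_left:
  assumes X: "X \<subseteq> carrier_vec n" and T: "lin_closed n T"
    and gen: "\<And>x. x \<in> X \<Longrightarrow> amul n gam x y \<in> T" and x: "x \<in> vspan n X"
  shows "amul n gam x y \<in> T"
proof -
  let ?T = "{x \<in> carrier_vec n. amul n gam x y \<in> T}"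
  have "lin_closed n ?T"
    using T unfolding lin_closed_def
    by (auto simp: amul_zero_left amul_add_left amul_smult_left)
  then have "vspan n X \<subseteq> ?T"
    by (rule vspan_sub[OF X]) (use X gen in auto)
  then show ?thesis using x by auto
qed

lemma amul_vspan_right:
  assumes Y: "Y \<subseteq> carrier_vec n" and T: "lin_closed n T"
    and gen: "\<And>y. y \<in> Y \<Longrightarrow> amul n gam x y \<in> T" and y: "y \<in> vspan n Y"
  shows "amul n gam x y \<in> T"
proof -
  let ?T = "{y \<in> carrier_vec n. amul n gam x y \<in> T}"
  have "lin_closed n ?T"
    using T unfolding lin_closed_def
    by (auto simp: amul_zero_right amul_add_right amul_smult_right)
  then have "vspan n Y \<subseteq> ?T"
    by (rule vspan_sub[OF Y]) (use Y gen in auto)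
  then show ?thesis using y by auto
qed

lemma apow_eq: "1 < i \<Longrightarrow> apow n gam i =
   vspan n (\<Union>k\<in>{1..<i}. {amul n gam x y | x y. x \<in> apow n gam k \<and> y \<in> apow n gam (i - k)})"
proof -
  assume "1 < i"
  then have "\<not> i \<le> 1" by simp
  then show ?thesis by (subst apow.simps[of n gam i]) (rule if_not_P)
qed

lemma apow_carrier: "apow n gam i \<subseteq> carrier_vec n"
proof (cases "i \<le> 1")
  case True then show ?thesis by (subst apow.simps[of n gam i]) (simp only: if_P)
next
  case False
  have "vspan n (\<Union>k\<in>{1..<i}. {amul n gam x y | x y. x \<in> apow n gam k \<and> y \<in> apow n gam (i - k)}) \<subseteq> carrier_vec n"
    by (rule vspan_carrier) auto
  then show ?thesis using apow_eq[of i n gam] False by simp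
qed

lemma apow_prod:
  assumes "1 \<le> a" "1 \<le> b" "x \<in> apow n gam a" "y \<in> apow n gam b"
  shows "amul n gam x y \<in> apow n gam (a + b)"
proof -
  have "amul n gam x y \<in> (\<Union>k\<in>{1..<a+b}. {amul n gam x y | x y. x \<in> apow n gam k \<and> y \<in> apow n gam (a + b - k)})"
    using assms by force
  then have "amul n gam x y \<in> vspan n (\<Union>k\<in>{1..<a+b}. {amul n gam x y | x y. x \<in> apow n gam k \<and> y \<in> apow n gam (a + b - k)})"
    by (intro vspan_base) auto
  then show ?thesis using apow_eq[of "a+b" n gam] assms by simp
qed

lemma assocD:
  assumes "is_assoc_alg n gam" "x \<in> carrier_vec n" "y \<in> carrier_vec n" "z \<in> carrier_vec n"
  shows "amul n gam (amul n gam x y) z = amul n gam x (amul n gam y z)"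
  using assms unfolding is_assoc_alg_def by blast

lemma apow_split:
  assumes assoc: "is_assoc_alg n gam"
  shows "1 \<le> k \<Longrightarrow> k < M \<Longrightarrow> apow n gam M \<subseteq>
     vspan n {amul n gam x y | x y. x \<in> apow n gam k \<and> y \<in> apow n gam (M - k)}"
proof (induction M arbitrary: k rule: less_induct)
  case (less M)
  define Q where "Q = (\<lambda>k M. vspan n {amul n gam x y | x y. x \<in> apow n gam k \<and> y \<in> apow n gam (M - k)})"
  have Qc: "lin_closed n (Q k' M')" for k' M'
    unfolding Q_def by (rule vspan_closed) auto
  have Qb: "amul n gam x y \<in> Q k' M'" if "x \<in> apow n gam k'" "y \<in> apow n gam (M' - k')" for x y k' M'
    unfolding Q_def by (rule vspan_base) (use that in auto)
  have AC: "\<And>i x. x \<in> apow n gam i \<Longrightarrow> x \<in> carrier_vec n" using apow_carrier by blast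
  have "apow n gam M = vspan n (\<Union>a\<in>{1..<M}. {amul n gam x y | x y. x \<in> apow n gam a \<and> y \<in> apow n gam (M - a)})"
    using less.prems apow_eq[of M n gam] by simp
  also have "\<dots> \<subseteq> Q k M"
  proof (rule vspan_sub[OF _ Qc])
    show "(\<Union>a\<in>{1..<M}. {amul n gam x y | x y. x \<in> apow n gam a \<and> y \<in> apow n gam (M - a)}) \<subseteq> carrier_vec n"
      by auto
    show "(\<Union>a\<in>{1..<M}. {amul n gam x y | x y. x \<in> apow n gam a \<and> y \<in> apow n gam (M - a)}) \<subseteq> Q k M"
    proof (clarify)
      fix a x y assume a: "a \<in> {1..<M}" and x: "x \<in> apow n gam a" and y: "y \<in> apow n gam (M - a)"
      consider "a = k" | "k < a" | "a < k" by linarith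
      then show "amul n gam x y \<in> Q k M"
      proof cases
        case 1 then show ?thesis using Qb x y by simp
      next
        case 2
        let ?X = "{amul n gam x y |x y. x \<in> apow n gam k \<and> y \<in> apow n gam (a - k)}"
        have "apow n gam a \<subseteq> vspan n ?X" by (rule less.IH) (use a 2 less.prems in auto)
        then have xQ: "x \<in> vspan n ?X" using x by auto
        have gen: "amul n gam w y \<in> Q k M" if "w \<in> ?X" for w
        proof -
          obtain u v where w: "w = amul n gam u v" "u \<in> apow n gam k" "v \<in> apow n gam (a - k)"
            using \<open>w \<in> ?X\<close> by blast
          have "amul n gam w y = amul n gam u (amul n gam v y)"
            unfolding w(1) by (rule assocD[OF assoc]) (use w y AC in auto)
          moreover have "amul n gam v y \<in> apow n gam (a - k + (M - a))"
            by (rule apow_prod) (use w y a 2 in auto)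
          moreover have "a - k + (M - a) = M - k" using a 2 by auto
          ultimately show "amul n gam w y \<in> Q k M" using Qb w by auto
        qed
        show ?thesis by (rule amul_vspan_left[OF _ Qc gen xQ]) auto
      next
        case 3
        let ?Y = "{amul n gam x y |x y. x \<in> apow n gam (k - a) \<and> y \<in> apow n gam (M - a - (k - a))}"
        have "apow n gam (M - a) \<subseteq> vspan n ?Y" by (rule less.IH) (use a 3 less.prems in auto)
        then have yQ: "y \<in> vspan n ?Y" using y by auto
        have gen: "amul n gam x w \<in> Q k M" if "w \<in> ?Y" for w
        proof -
          obtain u v where w: "w = amul n gam u v" "u \<in> apow n gam (k - a)" "v \<in> apow n gam (M - a - (k - a))"
            using \<open>w \<in> ?Y\<close> by blast
          have "amul n gam x w = amul n gam (amul n gam x u) v"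
            unfolding w(1) by (rule assocD[OF assoc, symmetric]) (use w x AC in auto)
          moreover have "amul n gam x u \<in> apow n gam (a + (k - a))"
            by (rule apow_prod) (use w x a 3 in auto)
          moreover have "a + (k - a) = k" "M - a - (k - a) = M - k" using a 3 less.prems by auto
          ultimately show "amul n gam x w \<in> Q k M" using Qb w by auto
        qed
        show ?thesis by (rule amul_vspan_right[OF _ Qc gen yQ]) auto
      qed
    qed
  qed
  finally show ?case unfolding Q_def .
qed



lemma lc_carrier:
  assumes "\<forall>t\<in>I. w t \<in> carrier_vec n"
  shows "finsum_vec TYPE(complex) n (\<lambda>t. c t \<cdot>\<^sub>v w t) I \<in> carrier_vec n"
  by (rule finsum_vec_closed) (use assms in auto)

lemma lc_dim:
  assumes "\<forall>t\<in>I. w t \<in> carrier_vec n"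
  shows "dim_vec (finsum_vec TYPE(complex) n (\<lambda>t. c t \<cdot>\<^sub>v w t) I) = n"
  using lc_carrier[OF assms] by simp

lemma lc_idx:
  assumes "finite I" "\<forall>t\<in>I. w t \<in> carrier_vec n" "k < n"
  shows "finsum_vec TYPE(complex) n (\<lambda>t. c t \<cdot>\<^sub>v w t) I $ k = (\<Sum>t\<in>I. c t * w t $ k)"
proof -
  have "finsum_vec TYPE(complex) n (\<lambda>t. c t \<cdot>\<^sub>v w t) I $ k = (\<Sum>t\<in>I. (c t \<cdot>\<^sub>v w t) $ k)"
    by (rule index_finsum_vec) (use assms in auto)
  also have "\<dots> = (\<Sum>t\<in>I. c t * w t $ k)"
    by (rule sum.cong) (use assms in auto)
  finally show ?thesis .
qed

lemma indep_notin:
  assumes basis: "is_basis n B" and I: "I \<subseteq> {..<n}" and t0: "t0 < n" "t0 \<notin> I"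
  shows "B t0 \<notin> vspan n (B ` I)"
proof
  assume mem: "B t0 \<in> vspan n (B ` I)"
  have Bc: "\<forall>t\<in>{..<n}. B t \<in> carrier_vec n" using basis unfolding is_basis_def by auto
  have indep: "\<And>c. finsum_vec TYPE(complex) n (\<lambda>i. c i \<cdot>\<^sub>v B i) {..<n} = 0\<^sub>v n \<Longrightarrow> c t0 = 0"
    using basis t0 unfolding is_basis_def by auto
  let ?T = "{v. \<exists>c. (\<forall>t. t \<notin> I \<longrightarrow> c t = 0) \<and> v = finsum_vec TYPE(complex) n (\<lambda>t. c t \<cdot>\<^sub>v B t) {..<n}}"
  have LC: "finsum_vec TYPE(complex) n (\<lambda>t. c t \<cdot>\<^sub>v B t) {..<n} \<in> carrier_vec n" for c
    by (rule lc_carrier) (use Bc in auto)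
  have cl: "lin_closed n ?T"
    unfolding lin_closed_def
  proof (intro conjI ballI allI impI)
    have "0\<^sub>v n = finsum_vec TYPE(complex) n (\<lambda>t. 0 \<cdot>\<^sub>v B t) {..<n}"
    proof (rule eq_vecI)
      have L: "finsum_vec TYPE(complex) n (\<lambda>t. 0 \<cdot>\<^sub>v B t) {..<n} \<in> carrier_vec n"
        using LC[of "\<lambda>_. 0"] by simp
      then show "dim_vec (0\<^sub>v n :: complex vec) = dim_vec (finsum_vec TYPE(complex) n (\<lambda>t. 0 \<cdot>\<^sub>v B t) {..<n})"
        by simp
      fix k assume "k < dim_vec (finsum_vec TYPE(complex) n (\<lambda>t. 0 \<cdot>\<^sub>v B t) {..<n})"
      then have k: "k < n" using L by simp
      show "0\<^sub>v n $ k = finsum_vec TYPE(complex) n (\<lambda>t. 0 \<cdot>\<^sub>v B t) {..<n} $ k"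
        using lc_idx[OF _ Bc k, of "\<lambda>_. 0"] k by simp
    qed
    then show "0\<^sub>v n \<in> ?T" by (intro CollectI exI[of _ "\<lambda>_. 0"]) auto
  next
    fix u v assume "u \<in> ?T" "v \<in> ?T"
    then obtain c1 c2 where c: "\<forall>t. t \<notin> I \<longrightarrow> c1 t = 0" "u = finsum_vec TYPE(complex) n (\<lambda>t. c1 t \<cdot>\<^sub>v B t) {..<n}"
      "\<forall>t. t \<notin> I \<longrightarrow> c2 t = 0" "v = finsum_vec TYPE(complex) n (\<lambda>t. c2 t \<cdot>\<^sub>v B t) {..<n}" by blast
    have "u + v = finsum_vec TYPE(complex) n (\<lambda>t. (c1 t + c2 t) \<cdot>\<^sub>v B t) {..<n}"
    proof (rule eq_vecI)
      fix k assume "k < dim_vec (finsum_vec TYPE(complex) n (\<lambda>t. (c1 t + c2 t) \<cdot>\<^sub>v B t) {..<n})"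
      then have k: "k < n" using Bc by (simp add: lc_dim)
      show "(u + v) $ k = finsum_vec TYPE(complex) n (\<lambda>t. (c1 t + c2 t) \<cdot>\<^sub>v B t) {..<n} $ k"
        unfolding c(2,4) using k
        by (simp add: lc_idx[OF _ Bc k] lc_dim[OF Bc] distrib_right sum.distrib)
    qed (use LC c Bc in \<open>simp add: lc_dim\<close>)
    then show "u + v \<in> ?T" using c by (intro CollectI exI[of _ "\<lambda>t. c1 t + c2 t"]) auto
  next
    fix a u assume "u \<in> ?T"
    then obtain c1 where c: "\<forall>t. t \<notin> I \<longrightarrow> c1 t = 0" "u = finsum_vec TYPE(complex) n (\<lambda>t. c1 t \<cdot>\<^sub>v B t) {..<n}"
      by blast
    have "a \<cdot>\<^sub>v u = finsum_vec TYPE(complex) n (\<lambda>t. (a * c1 t) \<cdot>\<^sub>v B t) {..<n}"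
    proof (rule eq_vecI)
      fix k assume "k < dim_vec (finsum_vec TYPE(complex) n (\<lambda>t. (a * c1 t) \<cdot>\<^sub>v B t) {..<n})"
      then have k: "k < n" using Bc by (simp add: lc_dim)
      show "(a \<cdot>\<^sub>v u) $ k = finsum_vec TYPE(complex) n (\<lambda>t. (a * c1 t) \<cdot>\<^sub>v B t) {..<n} $ k"
        unfolding c(2) using k
        by (simp add: lc_idx[OF _ Bc k] lc_dim[OF Bc] sum_distrib_left mult.assoc)
    qed (use LC c Bc in \<open>simp add: lc_dim\<close>)
    then show "a \<cdot>\<^sub>v u \<in> ?T" using c by (intro CollectI exI[of _ "\<lambda>t. a * c1 t"]) auto
  qed
  have gen: "B ` I \<subseteq> ?T"
  proof
    fix v assume "v \<in> B ` I"
    then obtain t where t: "t \<in> I" "v = B t" by auto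
    have tn: "t < n" using t I by auto
    have "B t = finsum_vec TYPE(complex) n (\<lambda>u. (if u = t then 1 else 0) \<cdot>\<^sub>v B u) {..<n}"
    proof (rule eq_vecI)
      fix k assume "k < dim_vec (finsum_vec TYPE(complex) n (\<lambda>u. (if u = t then 1 else 0) \<cdot>\<^sub>v B u) {..<n})"
      then have k: "k < n" using Bc by (simp add: lc_dim)
      have "(\<Sum>u\<in>{..<n}. (if u = t then 1 else 0) * B u $ k) = B t $ k"
      proof -
        have "(\<Sum>u\<in>{..<n}. (if u = t then 1 else 0) * B u $ k) = (\<Sum>u\<in>{..<n}. if u = t then B u $ k else 0)"
          by (rule sum.cong) auto
        then show ?thesis using tn by simp
      qed
      then show "B t $ k = finsum_vec TYPE(complex) n (\<lambda>u. (if u = t then 1 else 0) \<cdot>\<^sub>v B u) {..<n} $ k"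
        using lc_idx[OF _ Bc k] by simp
    qed (use Bc tn in \<open>simp add: lc_dim\<close>)
    then show "v \<in> ?T" using t by (intro CollectI exI[of _ "\<lambda>u. if u = t then 1 else 0"]) auto
  qed
  have "vspan n (B ` I) \<subseteq> ?T"
    by (rule vspan_sub[OF _ cl gen]) (use Bc I in auto)
  then obtain c where c: "\<forall>t. t \<notin> I \<longrightarrow> c t = 0" "B t0 = finsum_vec TYPE(complex) n (\<lambda>t. c t \<cdot>\<^sub>v B t) {..<n}"
    using mem by blast
  define d where "d = (\<lambda>t. c t - (if t = t0 then 1 else 0))"
  have "finsum_vec TYPE(complex) n (\<lambda>t. d t \<cdot>\<^sub>v B t) {..<n} = 0\<^sub>v n"
  proof (rule eq_vecI)
    fix k assume "k < dim_vec (0\<^sub>v n :: complex vec)"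
    then have k: "k < n" by auto
    have "(\<Sum>t\<in>{..<n}. d t * B t $ k) = (\<Sum>t\<in>{..<n}. c t * B t $ k) - B t0 $ k"
    proof -
      have "(\<Sum>t\<in>{..<n}. d t * B t $ k) = (\<Sum>t\<in>{..<n}. c t * B t $ k - (if t = t0 then B t $ k else 0))"
        unfolding d_def by (rule sum.cong) (auto simp: left_diff_distrib)
      then show ?thesis using t0 by (simp add: sum_subtractf)
    qed
    also have "\<dots> = 0" using c(2) k lc_idx[OF _ Bc k] by (metis finite_lessThan right_minus_eq)
    finally show "finsum_vec TYPE(complex) n (\<lambda>t. d t \<cdot>\<^sub>v B t) {..<n} $ k = 0\<^sub>v n $ k"
      using lc_idx[OF _ Bc k] k by simp
  qed (use Bc in \<open>simp add: lc_dim\<close>)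
  then have "d t0 = 0" by (rule indep)
  then show False using c(1) t0 unfolding d_def by simp
qed



theorem mainTheorem1:
  fixes n p :: nat and gam :: "nat \<Rightarrow> nat \<Rightarrow> nat \<Rightarrow> complex"
    and G :: "nat \<Rightarrow> complex vec set"
    and e f :: "nat \<Rightarrow> complex vec" and r :: "nat \<Rightarrow> nat"
  assumes "p \<ge> 1"
    and "is_assoc_alg n gam"
    and "is_nilpotent_alg n gam"
    and "is_natural_grading n gam G"
    and "is_p_filiform n gam p"
    and "is_basis n (\<lambda>i. if i < n - p then e (i + 1) else f (i - (n - p) + 1))"
    and "e 1 \<in> G 1"
    and "\<forall>i. 1 \<le> i \<and> i \<le> n - p - 1 \<longrightarrow> amul n gam (e 1) (e i) = e (i + 1)"
    and "amul n gam (e 1) (e (n - p)) = 0\<^sub>v n"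
    and "\<forall>j. 1 \<le> j \<and> j \<le> p \<longrightarrow> amul n gam (e 1) (f j) = 0\<^sub>v n"
    and "\<forall>i. 1 \<le> i \<and> i \<le> n - p \<longrightarrow> e i \<in> G i"
    and "\<forall>i. 1 \<le> i \<and> i \<le> p \<longrightarrow> 1 \<le> r i \<and> f i \<in> G (r i)"
    and "\<forall>i j. 1 \<le> i \<and> i \<le> j \<and> j \<le> p \<longrightarrow> r i \<le> r j"
    and "r p \<le> n - p"
  shows "\<forall>s. 1 \<le> s \<and> s \<le> p \<longrightarrow> r s \<le> s"
proof (intro allI impI)
  fix s assume s: "1 \<le> s \<and> s \<le> p"
  show "r s \<le> s"
  proof (rule ccontr)
    assume ns: "\<not> r s \<le> s"
    define N where "N = n - p"
    define B where "B = (\<lambda>i. if i < N then e (i + 1) else f (i - N + 1))"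
    define dg where "dg = (\<lambda>t. if t < N then t + 1 else r (t - N + 1))"
    have basis: "is_basis n B" using assms(6) unfolding B_def N_def .
    have rp: "1 \<le> r p" using assms(1,12) by auto
    have rpN: "r p \<le> N" using assms(14) unfolding N_def .
    have N1: "1 \<le> N" using rp rpN by simp
    have nN: "n = N + p" using N1 unfolding N_def by simp
    have Bc: "\<forall>t\<in>{..<n}. B t \<in> carrier_vec n" using basis unfolding is_basis_def by auto
    have Bc': "\<And>t. t < n \<Longrightarrow> B t \<in> carrier_vec n" using Bc by auto
    have Be: "\<And>j. 1 \<le> j \<Longrightarrow> j \<le> N \<Longrightarrow> B (j - 1) = e j" unfolding B_def by auto
    have Bf: "\<And>j. 1 \<le> j \<Longrightarrow> j \<le> p \<Longrightarrow> B (N + j - 1) = f j" unfolding B_def by auto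
    have ec: "e j \<in> carrier_vec n" if "1 \<le> j" "j \<le> N" for j
    proof -
      have "j - 1 < n" using that nN by simp
      then have "B (j - 1) \<in> carrier_vec n" by (rule Bc')
      then show ?thesis using Be[OF that] by simp
    qed
    note GR = assms(4)[unfolded is_natural_grading_def]
    have Gsub: "\<And>i. 1 \<le> i \<Longrightarrow> is_subspace n (G i)"
      using GR[THEN conjunct1] by blast
    have Gcl: "\<And>i. 1 \<le> i \<Longrightarrow> lin_closed n (G i)" using Gsub subspace_closed by blast
    have Gc: "\<And>i. 1 \<le> i \<Longrightarrow> G i \<subseteq> carrier_vec n" using Gsub unfolding is_subspace_def by blast
    have Gdir: "\<And>F v. finite F \<Longrightarrow> F \<subseteq> {1..} \<Longrightarrow> (\<forall>i\<in>F. v i \<in> G i) \<Longrightarrow>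
        finsum_vec TYPE(complex) n v F = 0\<^sub>v n \<Longrightarrow> \<forall>i\<in>F. v i = 0\<^sub>v n"
      using GR[THEN conjunct2, THEN conjunct2, THEN conjunct1] by blast
    have apowG: "\<And>m. 1 \<le> m \<Longrightarrow> apow n gam m = vspan n (\<Union>i\<in>{m..}. G i)"
      using GR[THEN conjunct2, THEN conjunct2, THEN conjunct2] by blast
    have UGc: "(\<Union>i\<in>{m..}. G i) \<subseteq> carrier_vec n" if "1 \<le> m" for m
    proof (rule UN_least)
      fix i assume "i \<in> {m..}"
      then have "1 \<le> i" using that by simp
      then show "G i \<subseteq> carrier_vec n" by (rule Gc)
    qed
    have G_apow: "G i \<subseteq> apow n gam m" if "1 \<le> m" "m \<le> i" for i m
    proof -
      have "G i \<subseteq> vspan n (\<Union>i\<in>{m..}. G i)"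
        using that by (intro subsetI vspan_base[OF UGc[OF that(1)]]) auto
      then show ?thesis using apowG[OF that(1)] by simp
    qed
    have apow_mono: "apow n gam M \<subseteq> apow n gam m" if "1 \<le> m" "m \<le> M" for m M
      using apowG[of m] apowG[of M] that vspan_mono[of "\<Union>i\<in>{M..}. G i" "\<Union>i\<in>{m..}. G i" n] by force
    have AC: "\<And>i x. x \<in> apow n gam i \<Longrightarrow> x \<in> carrier_vec n" using apow_carrier by blast
    have a11: "\<forall>i. 1 \<le> i \<and> i \<le> N \<longrightarrow> e i \<in> G i" using assms(11) unfolding N_def .
    have dg1: "1 \<le> dg t" if t: "t < n" for t
    proof (cases "t < N")
      case True then show ?thesis unfolding dg_def by simp
    next
      case False
      then have "1 \<le> t - N + 1 \<and> t - N + 1 \<le> p" using t nN by auto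
      then have "1 \<le> r (t - N + 1)" using assms(12) by blast
      then show ?thesis using False unfolding dg_def by simp
    qed
    have BG: "B t \<in> G (dg t)" if t: "t < n" for t
    proof (cases "t < N")
      case True
      then have "1 \<le> t + 1 \<and> t + 1 \<le> N" by simp
      then have "e (t + 1) \<in> G (t + 1)" using a11 by blast
      then show ?thesis using True unfolding dg_def B_def by simp
    next
      case False
      then have "1 \<le> t - N + 1 \<and> t - N + 1 \<le> p" using t nN by auto
      then have "f (t - N + 1) \<in> G (r (t - N + 1))" using assms(12) by blast
      then show ?thesis using False unfolding dg_def B_def by simp
    qed
    define Sp where "Sp = (\<lambda>I. vspan n (B ` I))"
    have SpC: "\<And>I. I \<subseteq> {..<n} \<Longrightarrow> B ` I \<subseteq> carrier_vec n" using Bc by auto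
    have Sp_cl: "\<And>I. I \<subseteq> {..<n} \<Longrightarrow> lin_closed n (Sp I)" unfolding Sp_def using vspan_closed SpC by blast
    have Sp_c: "\<And>I. I \<subseteq> {..<n} \<Longrightarrow> Sp I \<subseteq> carrier_vec n" unfolding Sp_def using vspan_carrier SpC by blast
    have Sp_b: "\<And>I t. I \<subseteq> {..<n} \<Longrightarrow> t \<in> I \<Longrightarrow> B t \<in> Sp I" unfolding Sp_def using vspan_base SpC by blast

    have Gdeg: "x \<in> Sp {t. t < n \<and> dg t = i}" if i: "1 \<le> i" and x: "x \<in> G i" for i x
    proof -
      have xc: "x \<in> carrier_vec n" using Gc[OF i] x by auto
      obtain c where c: "x = finsum_vec TYPE(complex) n (\<lambda>t. c t \<cdot>\<^sub>v B t) {..<n}"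
        using basis xc unfolding is_basis_def by blast
      define D where "D = insert i (dg ` {..<n})"
      define S where "S = (\<lambda>d. {t. t < n \<and> dg t = d})"
      define v where "v = (\<lambda>d. finsum_vec TYPE(complex) n (\<lambda>t. c t \<cdot>\<^sub>v B t) (S d) + (if d = i then (-1) \<cdot>\<^sub>v x else 0\<^sub>v n))"
      have fD: "finite D" unfolding D_def by simp
      have D1: "D \<subseteq> {1..}" unfolding D_def using i dg1 by auto
      have SS: "\<And>d. S d \<subseteq> {..<n}" "\<And>d. finite (S d)" unfolding S_def by auto
      have BcS: "\<And>d. \<forall>t\<in>S d. B t \<in> carrier_vec n" using Bc SS by auto
      have vG: "\<forall>d\<in>D. v d \<in> G d"
      proof
        fix d assume d: "d \<in> D"
        have d1: "1 \<le> d" using D1 d by auto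
        have "finsum_vec TYPE(complex) n (\<lambda>t. c t \<cdot>\<^sub>v B t) (S d) \<in> G d"
          by (rule lc_in[OF SS(2) Gcl[OF d1] Gc[OF d1]]) (use BG in \<open>auto simp: S_def\<close>)
        moreover have "(if d = i then (-1) \<cdot>\<^sub>v x else 0\<^sub>v n) \<in> G d"
          using Gcl[OF d1] x unfolding lin_closed_def by auto
        ultimately show "v d \<in> G d" unfolding v_def using Gcl[OF d1] unfolding lin_closed_def by blast
      qed
      have vc: "\<And>d. v d \<in> carrier_vec n" unfolding v_def using lc_carrier[OF BcS] xc by auto
      have vk: "v d $ k = (\<Sum>t\<in>S d. c t * B t $ k) - (if d = i then x $ k else 0)" if k: "k < n" for d k
        unfolding v_def using k xc lc_idx[OF SS(2) BcS k] lc_carrier[OF BcS] by (cases "d = i") auto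
      have xk: "x $ k = (\<Sum>t\<in>{..<n}. c t * B t $ k)" if k: "k < n" for k
        using c lc_idx[OF _ Bc k] by simp
      have "finsum_vec TYPE(complex) n v D = 0\<^sub>v n"
      proof (rule eq_vecI)
        have fc: "finsum_vec TYPE(complex) n v D \<in> carrier_vec n" by (rule finsum_vec_closed) (use vc in auto)
        then show "dim_vec (finsum_vec TYPE(complex) n v D) = dim_vec (0\<^sub>v n :: complex vec)" by simp
        fix k assume "k < dim_vec (0\<^sub>v n :: complex vec)"
        then have k: "k < n" by simp
        have "finsum_vec TYPE(complex) n v D $ k = (\<Sum>d\<in>D. v d $ k)"
          by (rule index_finsum_vec) (use fD k vc in auto)
        also have "\<dots> = (\<Sum>d\<in>D. \<Sum>t\<in>S d. c t * B t $ k) - (\<Sum>d\<in>D. if d = i then x $ k else 0)"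
          using vk[OF k] by (simp add: sum_subtractf)
        also have "(\<Sum>d\<in>D. if d = i then x $ k else 0) = x $ k"
          using fD by (simp add: D_def)
        also have "(\<Sum>d\<in>D. \<Sum>t\<in>S d. c t * B t $ k) = (\<Sum>t\<in>{..<n}. c t * B t $ k)"
          using sum.group[of "{..<n}" D dg "\<lambda>t. c t * B t $ k"] fD by (auto simp: D_def S_def)
        finally show "finsum_vec TYPE(complex) n v D $ k = 0\<^sub>v n $ k" using xk[OF k] k by simp
      qed
      then have vi: "v i = 0\<^sub>v n" using Gdir[OF fD D1 vG] by (simp add: D_def)
      have "x = finsum_vec TYPE(complex) n (\<lambda>t. c t \<cdot>\<^sub>v B t) (S i)"
      proof (rule eq_vecI)
        show "dim_vec x = dim_vec (finsum_vec TYPE(complex) n (\<lambda>t. c t \<cdot>\<^sub>v B t) (S i))"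
          using xc by (simp add: lc_dim[OF BcS])
        fix k assume "k < dim_vec (finsum_vec TYPE(complex) n (\<lambda>t. c t \<cdot>\<^sub>v B t) (S i))"
        then have k: "k < n" by (simp add: lc_dim[OF BcS])
        have "v i $ k = 0" using vi k by simp
        then show "x $ k = finsum_vec TYPE(complex) n (\<lambda>t. c t \<cdot>\<^sub>v B t) (S i) $ k"
          using vk[OF k, of i] lc_idx[OF SS(2) BcS k] by simp
      qed
      also have "\<dots> \<in> Sp (S i)"
        by (rule lc_in[OF SS(2) Sp_cl[OF SS(1)] Sp_c[OF SS(1)]]) (use Sp_b[OF SS(1)] in auto)
      finally show ?thesis unfolding S_def .
    qed
    have apow_Sp: "apow n gam m \<subseteq> Sp {t. t < n \<and> m \<le> dg t}" if m: "1 \<le> m" for m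
      unfolding apowG[OF m]
    proof (rule vspan_sub[OF UGc[OF m] Sp_cl])
      show "{t. t < n \<and> m \<le> dg t} \<subseteq> {..<n}" by auto
      show "(\<Union>i\<in>{m..}. G i) \<subseteq> Sp {t. t < n \<and> m \<le> dg t}"
      proof (rule UN_least, rule subsetI)
        fix i x assume i: "i \<in> {m..}" and x: "x \<in> G i"
        have "x \<in> Sp {t. t < n \<and> dg t = i}" using Gdeg[OF _ x] i m by auto
        also have "\<dots> \<subseteq> Sp {t. t < n \<and> m \<le> dg t}" unfolding Sp_def
          by (rule vspan_mono) (use i in auto)
        finally show "x \<in> Sp {t. t < n \<and> m \<le> dg t}" .
      qed
    qed
    define W where "W = (\<lambda>m. vspan n {e j | j. 1 \<le> j \<and> m \<le> j \<and> j \<le> N})"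
    have WC: "\<And>m. {e j | j. 1 \<le> j \<and> m \<le> j \<and> j \<le> N} \<subseteq> carrier_vec n" using ec by auto
    have W_cl: "\<And>m. lin_closed n (W m)" unfolding W_def using vspan_closed[OF WC] by blast
    have W_b: "\<And>m j. 1 \<le> j \<Longrightarrow> m \<le> j \<Longrightarrow> j \<le> N \<Longrightarrow> e j \<in> W m"
      unfolding W_def by (rule vspan_base[OF WC]) auto
    have W_mono: "\<And>m m'. m \<le> m' \<Longrightarrow> W m' \<subseteq> W m" unfolding W_def by (rule vspan_mono) auto
    have W0: "\<And>m. 0\<^sub>v n \<in> W m" using W_cl unfolding lin_closed_def by blast

    have e1mul: "amul n gam (e 1) y \<in> W (b + 1)" if b: "1 \<le> b" and y: "y \<in> apow n gam b" for b y
    proof -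
      have yS: "y \<in> Sp {t. t < n \<and> b \<le> dg t}" using apow_Sp[OF b] y by auto
      show ?thesis
      proof (rule amul_vspan_right[OF SpC W_cl _ yS[unfolded Sp_def]])
        show "{t. t < n \<and> b \<le> dg t} \<subseteq> {..<n}" by auto
        fix y' assume "y' \<in> B ` {t. t < n \<and> b \<le> dg t}"
        then obtain t where t: "t < n" "b \<le> dg t" "y' = B t" by auto
        show "amul n gam (e 1) y' \<in> W (b + 1)"
        proof (cases "t < N")
          case True
          then have y': "y' = e (t + 1)" "b \<le> t + 1" using t unfolding B_def dg_def by auto
          show ?thesis
          proof (cases "t + 1 \<le> N - 1")
            case True
            then have "amul n gam (e 1) y' = e (t + 2)" using assms(8) y' unfolding N_def by auto
            then show ?thesis using W_b[of "t + 2" "b + 1"] y' True by simp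
          next
            case False
            then have "t + 1 = N" using \<open>t < N\<close> by simp
            then have "amul n gam (e 1) y' = 0\<^sub>v n" using assms(9) y' unfolding N_def by simp
            then show ?thesis using W0 by simp
          qed
        next
          case False
          then have "y' = f (t - N + 1)" "1 \<le> t - N + 1" "t - N + 1 \<le> p" using t nN unfolding B_def by auto
          then have "amul n gam (e 1) y' = 0\<^sub>v n" using assms(10) by auto
          then show ?thesis using W0 by simp
        qed
      qed
    qed
    have eimul: "amul n gam (e i) y \<in> W (i + b)"
      if i: "1 \<le> i" "i \<le> N" and b: "1 \<le> b" and y: "y \<in> apow n gam b" for i b y
    proof (cases "i = 1")
      case True then show ?thesis using e1mul[OF b y] by (simp add: add.commute)
    next
      case False
      have ei: "e i = amul n gam (e 1) (e (i - 1))" using assms(8) i False unfolding N_def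
        by (metis (no_types, lifting) One_nat_def Suc_pred' diff_le_mono le_add1 le_add_diff_inverse2 le_neq_implies_less
            less_one not_le plus_1_eq_Suc)
      have e1c: "e 1 \<in> carrier_vec n" using ec[of 1] N1 by simp
      have eic: "e (i - 1) \<in> carrier_vec n" using ec[of "i - 1"] i False by simp
      have "amul n gam (e i) y = amul n gam (e 1) (amul n gam (e (i - 1)) y)"
        unfolding ei by (rule assocD[OF assms(2) e1c eic AC[OF y]])
      moreover have im: "1 \<le> i - 1 \<and> i - 1 \<le> N" using i False by auto
      have "e (i - 1) \<in> G (i - 1)" using a11 im by blast
      then have "e (i - 1) \<in> apow n gam (i - 1)"
        using G_apow[of "i - 1" "i - 1"] im by auto
      then have "amul n gam (e (i - 1)) y \<in> apow n gam (i - 1 + b)"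
        by (rule apow_prod[rotated 2, OF _ y]) (use i False b in auto)
      then have "amul n gam (e 1) (amul n gam (e (i - 1)) y) \<in> W (i - 1 + b + 1)"
        by (rule e1mul[rotated]) (use b in auto)
      moreover have "i - 1 + b + 1 = i + b" using i by simp
      ultimately show ?thesis by simp
    qed
    obtain K where K: "1 \<le> K" "K \<le> s" "K \<notin> r ` {1..<s}"
    proof -
      have "card (r ` {1..<s}) \<le> card {1..<s}" by (rule card_image_le) simp
      moreover have "card {1..<s} = s - 1" "card {1..s} = s" by simp_all
      ultimately have "card (r ` {1..<s}) < card {1..s}" using s by linarith
      have "\<not> {1..s} \<subseteq> r ` {1..<s}"
      proof
        assume "{1..s} \<subseteq> r ` {1..<s}"
        then have "card {1..s} \<le> card (r ` {1..<s})" by (intro card_mono) simp_all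
        then show False using \<open>card (r ` {1..<s}) < card {1..s}\<close> by linarith
      qed
      then obtain K where "K \<in> {1..s}" "K \<notin> r ` {1..<s}" by blast
      then show ?thesis using that by auto
    qed
    have rK: "r j \<noteq> K" if j: "1 \<le> j" "j \<le> p" for j
    proof (cases "j < s")
      case True then show ?thesis using K j by auto
    next
      case False
      then have "r s \<le> r j" using assms(13) s j by auto
      then show ?thesis using ns K by auto
    qed
    have KN: "K \<le> N" using K ns assms(13) s rpN by (metis le_trans nat_le_linear)
    have dgK: "t < N \<and> B t = e K" if t: "t < n" "dg t = K" for t
    proof (cases "t < N")
      case True then show ?thesis using t unfolding dg_def B_def by auto
    next
      case False
      then have "r (t - N + 1) = K" "1 \<le> t - N + 1" "t - N + 1 \<le> p" using t nN unfolding dg_def by auto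
      then show ?thesis using rK by blast
    qed
    obtain i0 where i0: "1 \<le> i0" "apow n gam i0 = {0\<^sub>v n}"
      using assms(3) unfolding is_nilpotent_alg_def by blast
    define M0 where "M0 = max i0 K"
    have big: "apow n gam M \<subseteq> W M" if "M0 \<le> M" for M
      using apow_mono[of i0 M] i0 that W0 unfolding M0_def by auto
    have step: "apow n gam M \<subseteq> W M" if KM: "K \<le> M" and IH: "apow n gam (M + 1) \<subseteq> W (M + 1)" for M
    proof -
      have hi: "B t \<in> apow n gam (K + 1)" if "t < n" "K < dg t" for t
        using BG[OF that(1)] G_apow[of "K + 1" "dg t"] that K by auto
      show ?thesis
      proof (cases "M = K")
        case True
        have "apow n gam K \<subseteq> W K"
        proof (rule subset_trans[OF apow_Sp[OF K(1)]], unfold Sp_def, rule vspan_sub[OF SpC W_cl])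
          show "{t. t < n \<and> K \<le> dg t} \<subseteq> {..<n}" by auto
          show "B ` {t. t < n \<and> K \<le> dg t} \<subseteq> W K"
          proof clarify
            fix t assume t: "t < n" "K \<le> dg t"
            show "B t \<in> W K"
            proof (cases "dg t = K")
              case True then show ?thesis using dgK[OF t(1)] W_b[of K K] K KN by auto
            next
              case False
              then have "B t \<in> W (K + 1)" using hi[OF t(1)] IH True t by auto
              then show ?thesis using W_mono[of K "K + 1"] by auto
            qed
          qed
        qed
        then show ?thesis using True by simp
      next
        case False
        then have KM': "K < M" using KM by simp
        have "apow n gam M \<subseteq> vspan n {amul n gam x y | x y. x \<in> apow n gam K \<and> y \<in> apow n gam (M - K)}"
          by (rule apow_split[OF assms(2) K(1) KM'])
        also have "\<dots> \<subseteq> W M"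
        proof (rule vspan_sub[OF _ W_cl])
          show "{amul n gam x y | x y. x \<in> apow n gam K \<and> y \<in> apow n gam (M - K)} \<subseteq> carrier_vec n" by auto
          show "{amul n gam x y | x y. x \<in> apow n gam K \<and> y \<in> apow n gam (M - K)} \<subseteq> W M"
          proof clarify
            fix x y assume x: "x \<in> apow n gam K" and y: "y \<in> apow n gam (M - K)"
            have xS: "x \<in> Sp {t. t < n \<and> K \<le> dg t}" using apow_Sp[OF K(1)] x by auto
            show "amul n gam x y \<in> W M"
            proof (rule amul_vspan_left[OF SpC W_cl _ xS[unfolded Sp_def]])
              show "{t. t < n \<and> K \<le> dg t} \<subseteq> {..<n}" by auto
              fix x' assume "x' \<in> B ` {t. t < n \<and> K \<le> dg t}"
              then obtain t where t: "t < n" "K \<le> dg t" "x' = B t" by auto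
              show "amul n gam x' y \<in> W M"
              proof (cases "dg t = K")
                case True
                then have "x' = e K" using dgK[OF t(1)] t by auto
                then show ?thesis using eimul[OF K(1) KN _ y] KM' by simp
              next
                case False
                then have "x' \<in> apow n gam (K + 1)" using hi[OF t(1)] t by auto
                then have "amul n gam x' y \<in> apow n gam (K + 1 + (M - K))"
                  by (rule apow_prod[rotated 2, OF _ y]) (use KM' in auto)
                then have "amul n gam x' y \<in> W (M + 1)" using IH KM' by auto
                then show ?thesis using W_mono[of M "M + 1"] by auto
              qed
            qed
          qed
        qed
        finally show ?thesis .
      qed
    qed
    have main: "\<forall>M. K \<le> M \<longrightarrow> M0 - M = d \<longrightarrow> apow n gam M \<subseteq> W M" for d
    proof (induction d)
      case 0 then show ?case using big by auto
    next
      case (Suc d)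
      show ?case
      proof (intro allI impI)
        fix M assume M: "K \<le> M" "M0 - M = Suc d"
        then have "apow n gam (M + 1) \<subseteq> W (M + 1)" using Suc.IH by auto
        then show "apow n gam M \<subseteq> W M" using step M(1) by blast
      qed
    qed
    have rs1: "1 \<le> r s" using assms(12) s by auto
    have "f s \<in> apow n gam (r s)" using G_apow[of "r s" "r s"] assms(12) s rs1 by auto
    also have "\<dots> \<subseteq> W (r s)" using main ns K by auto
    also have "\<dots> \<subseteq> W 1" by (rule W_mono) (use rs1 in auto)
    also have "\<dots> \<subseteq> vspan n (B ` {..<N})" unfolding W_def
    proof (rule vspan_mono, clarify)
      fix j assume j: "1 \<le> j" "1 \<le> j" "j \<le> N"
      then have "B (j - 1) = e j" "j - 1 < N" using Be by auto
      then show "e j \<in> B ` {..<N}" by force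
    qed
    finally have "B (N + s - 1) \<in> vspan n (B ` {..<N})" using Bf s by auto
    moreover have "B (N + s - 1) \<notin> vspan n (B ` {..<N})"
      by (rule indep_notin[OF basis]) (use nN s in auto)
    ultimately show False by simp
  qed
qed

end
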